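(* Let $X$ be a real Hilbert space, let $A\colon X\rightrightarrows X$ with $\operatorname{dom}A\ne\varnothing$, let $\rho\in\,]-1,+\infty[$, set $D=\operatorname{ran}(\mathrm{Id}+A)$, $T=J_A$ (i.e., $A=T^{-1}-\mathrm{Id}$), and $N=2(\rho+1)T-(2\rho+1)\mathrm{Id}$ (i.e., $T=\tfrac{2\rho+1}{2(\rho+1)}\mathrm{Id}+\tfrac{1}{2(\rho+1)}N$). Then: (i) $A$ is $\rho$-comonotone $\iff$ $N$ is nonexpansive. (ii) $A$ is maximally $\rho$-comonotone $\iff$ [$N$ is nonexpansive and $D=X$].
   Context: $J_A=(\mathrm{Id}+A)^{-1}$, defined on $D=\operatorname{ran}(\mathrm{Id}+A)$. An operator $N$ with domain $D$ is nonexpansive if it is single-valued and $\|Nx-Ny\|\le\|x-y\|$ for all $x,y\in D$. For $\rho\in\mathbb R$, $A$ is $\rho$-comonotone if $\langle x-y,u-v\rangle\ge\rho\|u-v\|^2$ for all $(x,u),(y,v)\in\operatorname{gra}A$; maximally $\rho$-comonotone if moreover no $\rho$-comonotone operator has a graph properly containing $\operatorname{gra}A$. *)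

theory Defs
  imports "HOL-Analysis.Analysis"
begin

text \<open>Set-valued operators A : X \<rightrightarrows> X are represented by their graphs
  (relations of type ('a \<times> 'a) set).\<close>

definition comonotone :: "real \<Rightarrow> ('a::real_inner \<times> 'a) set \<Rightarrow> bool" where
  "comonotone \<rho> A \<longleftrightarrow>
     (\<forall>x u y v. (x, u) \<in> A \<longrightarrow> (y, v) \<in> A \<longrightarrow> inner (x - y) (u - v) \<ge> \<rho> * (norm (u - v))\<^sup>2)"

definition max_comonotone :: "real \<Rightarrow> ('a::real_inner \<times> 'a) set \<Rightarrow> bool" where
  "max_comonotone \<rho> A \<longleftrightarrow> comonotone \<rho> A \<and> (\<forall>B. comonotone \<rho> B \<and> A \<subseteq> B \<longrightarrow> B = A)"

definition id_plus :: "('a::real_vector \<times> 'a) set \<Rightarrow> ('a \<times> 'a) set" where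
  "id_plus A = {(x, x + u) | x u. (x, u) \<in> A}"

definition resolvent :: "('a::real_vector \<times> 'a) set \<Rightarrow> ('a \<times> 'a) set" where
  "resolvent A = converse (id_plus A)"

definition Nop :: "real \<Rightarrow> ('a::real_vector \<times> 'a) set \<Rightarrow> ('a \<times> 'a) set" where
  "Nop \<rho> A = {(x, (2 * (\<rho> + 1)) *\<^sub>R t - (2 * \<rho> + 1) *\<^sub>R x) | x t. (x, t) \<in> resolvent A}"

definition nonexpansive_rel :: "('a::real_normed_vector \<times> 'a) set \<Rightarrow> bool" where
  "nonexpansive_rel N \<longleftrightarrow>
     (\<forall>x y z. (x, y) \<in> N \<longrightarrow> (x, z) \<in> N \<longrightarrow> y = z) \<and>
     (\<forall>x y x' y'. (x, y) \<in> N \<longrightarrow> (x', y') \<in> N \<longrightarrow> norm (y - y') \<le> norm (x - x'))"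

end

theory Submission
  imports Defs
begin


lemma var_id:
  fixes u :: "'i \<Rightarrow> 'a::real_inner"
  assumes "finite I" "sum \<mu> I = 1"
  shows "(\<Sum>i\<in>I. \<Sum>j\<in>I. \<mu> i * \<mu> j * norm (u i - u j)^2)
         = 2 * (\<Sum>i\<in>I. \<mu> i * norm (u i - w)^2) - 2 * norm ((\<Sum>i\<in>I. \<mu> i *\<^sub>R u i) - w)^2"
proof -
  define a where "a i = u i - w" for i
  have n: "norm (u i - u j)^2 = norm (a i)^2 + norm (a j)^2 - 2 * ((a i) \<bullet> (a j))" for i j
  proof -
    have "u i - u j = a i - a j" unfolding a_def by simp
    thus ?thesis by (simp add: power2_norm_eq_inner inner_diff_left inner_diff_right inner_commute)
  qed
  have s: "(\<Sum>i\<in>I. \<mu> i *\<^sub>R u i) - w = (\<Sum>i\<in>I. \<mu> i *\<^sub>R a i)"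
    unfolding a_def using assms by (simp add: scaleR_diff_right sum_subtractf scaleR_sum_left[symmetric])
  have "(\<Sum>i\<in>I. \<Sum>j\<in>I. \<mu> i * \<mu> j * norm (u i - u j)^2)
     = (\<Sum>i\<in>I. \<Sum>j\<in>I. \<mu> j * (\<mu> i * norm (a i)^2)) + (\<Sum>i\<in>I. \<Sum>j\<in>I. \<mu> i * (\<mu> j * norm (a j)^2))
       - 2 * (\<Sum>i\<in>I. \<Sum>j\<in>I. ((\<mu> i *\<^sub>R a i) \<bullet> (\<mu> j *\<^sub>R a j)))"
    unfolding n by (simp add: algebra_simps sum_subtractf sum.distrib sum_distrib_left)
  also have "\<dots> = 2 * (\<Sum>i\<in>I. \<mu> i * norm (a i)^2) - 2 * ((\<Sum>i\<in>I. \<mu> i *\<^sub>R a i) \<bullet> (\<Sum>j\<in>I. \<mu> j *\<^sub>R a j))"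
    using assms by (simp add: sum_distrib_left[symmetric] sum_distrib_right[symmetric] inner_sum_left inner_sum_right
        sum.swap[of "\<lambda>i j. \<mu> i * (\<mu> j * norm (a j)^2)"]) (simp add: sum_distrib_left, rule sum.swap)
  also have "\<dots> = 2 * (\<Sum>i\<in>I. \<mu> i * norm (u i - w)^2) - 2 * norm ((\<Sum>i\<in>I. \<mu> i *\<^sub>R u i) - w)^2"
    unfolding s by (simp add: a_def power2_norm_eq_inner)
  finally show ?thesis .
qed

lemma hull_idx:
  fixes y :: "'i \<Rightarrow> 'a::real_vector"
  assumes "finite I" "z \<in> convex hull (y ` I)"
  shows "\<exists>\<mu>. (\<forall>i\<in>I. 0 \<le> \<mu> i) \<and> sum \<mu> I = 1 \<and> (\<Sum>i\<in>I. \<mu> i *\<^sub>R y i) = z"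
proof -
  define K where "K = {(\<Sum>i\<in>I. \<mu> i *\<^sub>R y i) | \<mu>. (\<forall>i\<in>I. 0 \<le> \<mu> i) \<and> sum \<mu> I = 1}"
  have "y ` I \<subseteq> K"
  proof
    fix p assume "p \<in> y ` I"
    then obtain j where j: "j \<in> I" "p = y j" by auto
    have "(\<Sum>i\<in>I. (if i = j then 1 else 0) *\<^sub>R y i) = (\<Sum>i\<in>I. if i = j then y i else 0)"
      by (rule sum.cong) auto
    also have "\<dots> = y j" using j assms(1) by simp
    finally have e: "(\<Sum>i\<in>I. (if i = j then 1 else 0) *\<^sub>R y i) = y j" .
    show "p \<in> K" unfolding K_def
      by (rule CollectI, rule exI[of _ "\<lambda>i. if i = j then 1 else 0"])
         (use j assms(1) e in auto)
  qed
  moreover have "convex K" unfolding convex_def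
  proof (intro ballI allI impI)
    fix p q :: 'a and a b :: real
    assume p: "p \<in> K" and q: "q \<in> K" and ab: "0 \<le> a" "0 \<le> b" "a + b = 1"
    obtain \<mu> where m: "\<forall>i\<in>I. 0 \<le> \<mu> i" "sum \<mu> I = 1" "p = (\<Sum>i\<in>I. \<mu> i *\<^sub>R y i)" using p K_def by auto
    obtain \<nu> where n: "\<forall>i\<in>I. 0 \<le> \<nu> i" "sum \<nu> I = 1" "q = (\<Sum>i\<in>I. \<nu> i *\<^sub>R y i)" using q K_def by auto
    show "a *\<^sub>R p + b *\<^sub>R q \<in> K" unfolding K_def
    proof (rule CollectI, rule exI[of _ "\<lambda>i. a * \<mu> i + b * \<nu> i"], intro conjI)
      show "a *\<^sub>R p + b *\<^sub>R q = (\<Sum>i\<in>I. (a * \<mu> i + b * \<nu> i) *\<^sub>R y i)"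
        unfolding m(3) n(3) by (simp add: scaleR_sum_right sum.distrib scaleR_add_left)
      show "\<forall>i\<in>I. 0 \<le> a * \<mu> i + b * \<nu> i" using m n ab by simp
      show "(\<Sum>i\<in>I. a * \<mu> i + b * \<nu> i) = 1" using m n ab by (simp add: sum.distrib sum_distrib_left[symmetric])
    qed
  qed
  ultimately have "convex hull (y ` I) \<subseteq> K" by (rule hull_minimal)
  with assms(2) show ?thesis unfolding K_def by auto
qed

lemma cont_Max:
  fixes h :: "'i \<Rightarrow> 'a::topological_space \<Rightarrow> real"
  assumes "finite I" "I \<noteq> {}" "\<And>i. i \<in> I \<Longrightarrow> continuous_on S (h i)"
  shows "continuous_on S (\<lambda>z. Max ((\<lambda>i. h i z) ` I))"
  using assms
proof (induction I rule: finite_ne_induct)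
  case (singleton x)
  then show ?case by simp
next
  case (insert x F)
  have "continuous_on S (\<lambda>z. max (h x z) (Max ((\<lambda>i. h i z) ` F)))"
    using insert by (intro continuous_on_max) auto
  moreover have "Max ((\<lambda>i. h i z) ` insert x F) = max (h x z) (Max ((\<lambda>i. h i z) ` F))" for z
    using insert by (simp add: Max_insert)
  ultimately show ?case by simp
qed

lemma norm_sq_comb:
  fixes a b :: "'a::real_inner"
  shows "norm (a + s *\<^sub>R b)^2 = norm a^2 + 2 * s * (a \<bullet> b) + s^2 * norm b^2"
  unfolding power2_norm_eq_inner
  by (simp add: inner_add_left inner_add_right inner_commute algebra_simps power2_eq_square)

lemma kirsz_fin:
  fixes c y :: "'i \<Rightarrow> 'a::real_inner"
  assumes fin: "finite I"
    and lip: "\<And>i j. i\<in>I \<Longrightarrow> j\<in>I \<Longrightarrow> norm (y i - y j) \<le> norm (c i - c j)"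
    and ne: "\<And>i. i\<in>I \<Longrightarrow> c i \<noteq> x"
  shows "\<exists>z. \<forall>i\<in>I. norm (z - y i) \<le> norm (x - c i)"
proof (cases "I = {}")
  case True thus ?thesis by simp
next
  case False
  define r where "r i = norm (x - c i)" for i
  have rpos: "\<And>i. i \<in> I \<Longrightarrow> r i > 0" using ne unfolding r_def by auto
  define g where "g z = Max ((\<lambda>i. norm (z - y i) / r i) ` I)" for z
  define K where "K = convex hull (y ` I)"
  have Kc: "compact K" unfolding K_def using fin by (simp add: finite_imp_compact_convex_hull)
  have Kne: "K \<noteq> {}" unfolding K_def using False by simp
  have Kcv: "convex K" unfolding K_def by simp
  have gc: "continuous_on K g" unfolding g_def
    by (rule cont_Max[OF fin False]) (use rpos in \<open>force intro!: continuous_intros\<close>)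
  obtain z where zK: "z \<in> K" and zmin: "\<And>z'. z' \<in> K \<Longrightarrow> g z \<le> g z'"
    using continuous_attains_inf[OF Kc Kne gc] by blast
  define lam where "lam = g z"
  have gle: "norm (z - y i) / r i \<le> lam" if "i \<in> I" for i
    unfolding lam_def g_def using fin that by (intro Max_ge) auto
  have glt: "g w < lam" if h: "\<And>i. i\<in>I \<Longrightarrow> norm (w - y i)/r i < lam" for w
    unfolding g_def using fin False h by (subst Max_less_iff) auto
  have "lam \<le> 1"
  proof (rule ccontr)
    assume "\<not> lam \<le> 1" hence l1: "lam > 1" by simp
    define Ia where "Ia = {i\<in>I. norm (z - y i)/r i = lam}"
    have Iafin: "finite Ia" and IaI: "Ia \<subseteq> I" unfolding Ia_def using fin by auto
    have "lam \<in> (\<lambda>i. norm (z - y i) / r i) ` I" unfolding lam_def g_def using fin False by (intro Max_in) auto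
    hence Iane: "Ia \<noteq> {}" unfolding Ia_def by auto
    have act: "norm (z - y i) = lam * r i" if "i \<in> Ia" for i
      using that rpos[of i] IaI unfolding Ia_def by (auto simp: field_simps)
    define C where "C = convex hull (y ` Ia)"
    have CK: "C \<subseteq> K" unfolding C_def K_def using IaI by (intro hull_mono image_mono)
    have zC: "z \<in> C"
    proof (rule ccontr)
      assume zC: "z \<notin> C"
      have Cc: "compact C" unfolding C_def using Iafin by (simp add: finite_imp_compact_convex_hull)
      have Cne: "C \<noteq> {}" unfolding C_def using Iane by simp
      have Ccv: "convex C" unfolding C_def by simp
      obtain p where pC: "p \<in> C" and pmin: "\<And>q. q \<in> C \<Longrightarrow> norm (z - p) \<le> norm (z - q)"
      proof -
        have "continuous_on C (\<lambda>q. norm (z - q))" by (intro continuous_intros)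
        from continuous_attains_inf[OF Cc Cne this] show ?thesis using that by blast
      qed
      have pz: "p \<noteq> z" using pC zC by auto
      define \<delta> where "\<delta> = norm (p - z)"
      have dpos: "\<delta> > 0" unfolding \<delta>_def using pz by simp
      have obt: "((z - p) \<bullet> (q - p)) \<le> 0" if qC: "q \<in> C" for q
      proof (rule ccontr)
        assume "\<not> ((z - p) \<bullet> (q - p)) \<le> 0"
        hence pos: "((z - p) \<bullet> (q - p)) > 0" by simp
        define \<alpha> where "\<alpha> = ((z - p) \<bullet> (q - p))"
        define \<beta> where "\<beta> = norm (q - p)^2"
        have qp: "q \<noteq> p" using pos by auto
        hence bpos: "\<beta> > 0" unfolding \<beta>_def by simp
        define s where "s = min 1 (\<alpha> / \<beta>)"
        have s0: "s > 0" unfolding s_def using pos bpos \<alpha>_def by simp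
        have s1: "s \<le> 1" unfolding s_def by simp
        have sb: "s * \<beta> \<le> \<alpha>" unfolding s_def using bpos
          by (metis min.cobounded2 pos_le_divide_eq)
        have "p + s *\<^sub>R (q - p) \<in> C"
        proof -
          have "p + s *\<^sub>R (q - p) = (1 - s) *\<^sub>R p + s *\<^sub>R q" by (simp add: algebra_simps)
          thus ?thesis using Ccv pC qC s0 s1 unfolding convex_def by simp
        qed
        from pmin[OF this] have "norm (z - p)^2 \<le> norm (z - (p + s *\<^sub>R (q - p)))^2"
          by (simp add: power_mono)
        also have "norm (z - (p + s *\<^sub>R (q - p)))^2 = norm (z - p)^2 - 2 * s * \<alpha> + s^2 * \<beta>"
        proof -
          have "z - (p + s *\<^sub>R (q - p)) = (z - p) + (-s) *\<^sub>R (q - p)" by simp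
          hence "norm (z - (p + s *\<^sub>R (q - p))) = norm ((z - p) + (-s) *\<^sub>R (q - p))" by metis
          thus ?thesis unfolding \<alpha>_def \<beta>_def using norm_sq_comb[of "z - p" "-s" "q - p"] by simp
        qed
        finally have "0 \<le> s * (s * \<beta> - 2 * \<alpha>)" by (simp add: power2_eq_square algebra_simps)
        moreover have "s * \<beta> - 2 * \<alpha> < 0" using sb pos \<alpha>_def by simp
        ultimately show False using s0 by (simp add: mult_le_0_iff zero_le_mult_iff)
      qed
      define gap where "gap i = lam * r i - norm (z - y i)" for i
      have gappos: "gap i > 0" if "i \<in> I - Ia" for i
      proof -
        have "norm (z - y i) / r i < lam" using gle[of i] that unfolding Ia_def by auto
        thus ?thesis unfolding gap_def using rpos[of i] that by (simp add: pos_divide_less_eq mult.commute)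
      qed
      define t where "t = Min (insert 1 ((\<lambda>i. gap i / (2*\<delta>)) ` (I - Ia)))"
      have tfin: "finite (insert 1 ((\<lambda>i. gap i / (2*\<delta>)) ` (I - Ia)))" using fin by simp
      have t0: "t > 0" unfolding t_def using tfin gappos dpos by (subst Min_gr_iff) auto
      have t1: "t \<le> 1" unfolding t_def using tfin by (intro Min_le) auto
      have tg: "t \<le> gap i / (2*\<delta>)" if "i \<in> I - Ia" for i
        unfolding t_def using tfin that by (intro Min_le) auto
      define zt where "zt = z + t *\<^sub>R (p - z)"
      have ztK: "zt \<in> K"
      proof -
        have "zt = (1 - t) *\<^sub>R z + t *\<^sub>R p" unfolding zt_def by (simp add: algebra_simps)
        thus ?thesis using Kcv zK CK pC t0 t1 unfolding convex_def by auto
      qed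
      have "g zt < lam"
      proof (rule glt)
        fix i assume iI: "i \<in> I"
        have ri: "r i > 0" using rpos iI by simp
        have ed: "zt - y i = (z - y i) + t *\<^sub>R (p - z)" unfolding zt_def by simp
        show "norm (zt - y i)/r i < lam"
        proof (cases "i \<in> Ia")
          case True
          have yC: "y i \<in> C" unfolding C_def using True by (simp add: hull_inc)
          have eq: "norm (zt - y i)^2 = norm (z - y i)^2 + 2*t*((z - y i) \<bullet> (p - z)) + t^2 * \<delta>^2"
            unfolding ed \<delta>_def by (rule norm_sq_comb)
          have "((z - y i) \<bullet> (p - z)) = - (\<delta>^2) + ((z - p) \<bullet> (y i - p))"
            unfolding \<delta>_def power2_norm_eq_inner
            by (simp add: inner_diff_left inner_diff_right inner_commute algebra_simps)
          with obt[OF yC] have "((z - y i) \<bullet> (p - z)) \<le> - (\<delta>^2)" by simp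
          hence m: "(2*t) * ((z - y i) \<bullet> (p - z)) \<le> (2*t) * (- (\<delta>^2))"
            using t0 by (intro mult_left_mono) auto
          have e2: "t * (2 - t) * \<delta>^2 = - ((2*t) * (- (\<delta>^2))) - t^2 * \<delta>^2"
            by (simp add: power2_eq_square algebra_simps)
          have "norm (zt - y i)^2 \<le> norm (z - y i)^2 - t * (2 - t) * \<delta>^2"
            unfolding eq e2 using m by simp
          moreover have "t * (2 - t) * \<delta>^2 > 0" using t0 t1 dpos by simp
          ultimately have "norm (zt - y i)^2 < norm (z - y i)^2" by linarith
          hence "norm (zt - y i) < norm (z - y i)" by (rule power2_less_imp_less) simp
          hence "norm (zt - y i) < lam * r i" using act[OF True] by simp
          thus ?thesis using ri by (simp add: pos_divide_less_eq mult.commute)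
        next
          case False
          have "norm (zt - y i) \<le> norm (z - y i) + t * \<delta>"
            unfolding ed \<delta>_def using t0 by (metis abs_of_pos norm_scaleR norm_triangle_ineq)
          moreover have "2 * (t * \<delta>) \<le> gap i" using tg[of i] iI False dpos
            by (simp add: pos_le_divide_eq field_simps)
          moreover have "gap i > 0" using gappos iI False by simp
          ultimately have "norm (zt - y i) < norm (z - y i) + gap i" by linarith
          hence "norm (zt - y i) < lam * r i" unfolding gap_def by simp
          thus ?thesis using ri by (simp add: pos_divide_less_eq mult.commute)
        qed
      qed
      with zmin[OF ztK] show False unfolding lam_def by simp
    qed
    obtain \<mu> where mu: "\<forall>i\<in>Ia. 0 \<le> \<mu> i" "sum \<mu> Ia = 1" "(\<Sum>i\<in>Ia. \<mu> i *\<^sub>R y i) = z"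
      using hull_idx[OF Iafin zC[unfolded C_def]] by blast
    have a: "(\<Sum>i\<in>Ia. \<Sum>j\<in>Ia. \<mu> i * \<mu> j * norm (y i - y j)^2) = 2 * (\<Sum>i\<in>Ia. \<mu> i * norm (y i - z)^2)"
      using var_id[OF Iafin mu(2), of y z] mu(3) by simp
    have b: "(\<Sum>i\<in>Ia. \<Sum>j\<in>Ia. \<mu> i * \<mu> j * norm (c i - c j)^2) \<le> 2 * (\<Sum>i\<in>Ia. \<mu> i * norm (c i - x)^2)"
      using var_id[OF Iafin mu(2), of c x] by simp
    have c: "(\<Sum>i\<in>Ia. \<Sum>j\<in>Ia. \<mu> i * \<mu> j * norm (y i - y j)^2) \<le> (\<Sum>i\<in>Ia. \<Sum>j\<in>Ia. \<mu> i * \<mu> j * norm (c i - c j)^2)"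
      by (intro sum_mono mult_left_mono power_mono) (use lip mu IaI in auto)
    define S where "S = (\<Sum>i\<in>Ia. \<mu> i * r i^2)"
    have d: "(\<Sum>i\<in>Ia. \<mu> i * norm (y i - z)^2) = lam^2 * S"
      unfolding S_def sum_distrib_left
      by (rule sum.cong) (auto simp: norm_minus_commute act power_mult_distrib)
    have e: "(\<Sum>i\<in>Ia. \<mu> i * norm (c i - x)^2) = S"
      unfolding S_def r_def by (simp add: norm_minus_commute)
    have Spos: "S > 0"
    proof -
      obtain i where i: "i \<in> Ia" "\<mu> i > 0"
      proof (rule ccontr)
        assume "\<not> thesis"
        hence "\<forall>i\<in>Ia. \<mu> i \<le> 0" using that by force
        hence "sum \<mu> Ia \<le> 0" by (simp add: sum_nonpos)
        with mu(2) show False by simp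
      qed
      show ?thesis unfolding S_def
        by (rule sum_pos2[OF Iafin i(1)]) (use i rpos IaI mu in \<open>force intro!: mult_pos_pos\<close>)+
    qed
    have "1 < lam^2" using l1 by (simp add: one_less_power)
    hence "S < lam^2 * S" using Spos by simp
    with a b c d e show False by linarith
  qed
  show ?thesis
  proof (rule exI, intro ballI)
    fix i assume "i \<in> I"
    with gle[of i] \<open>lam \<le> 1\<close> rpos[of i] have "norm (z - y i) / r i \<le> 1" by linarith
    thus "norm (z - y i) \<le> norm (x - c i)" using rpos[OF \<open>i \<in> I\<close>] by (simp add: r_def pos_divide_le_eq)
  qed
qed

lemma parallelogram:
  fixes u v :: "'a::real_inner"
  shows "norm (u - v)^2 = 2 * norm u^2 + 2 * norm v^2 - norm (u + v)^2"
  unfolding power2_norm_eq_inner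
  by (simp add: inner_add_left inner_add_right inner_diff_left inner_diff_right inner_commute algebra_simps)

lemma half_half: "(1/2) *\<^sub>R a + (1/2) *\<^sub>R a = (a::'a::real_vector)"
proof -
  have "(1/2 + 1/2) *\<^sub>R a = a" by simp
  thus ?thesis by (simp only: scaleR_add_left)
qed

lemma close_aux:
  fixes s \<epsilon> a b M :: real
  assumes "0 \<le> s" "0 < \<epsilon>" "0 \<le> a" "0 \<le> b" "a \<le> s + \<epsilon>" "b \<le> s + \<epsilon>" "0 \<le> M" "2 * (s - \<epsilon>) \<le> M"
  shows "2 * a^2 + 2 * b^2 - M^2 \<le> 16 * \<epsilon> * (s + \<epsilon>)"
proof -
  have a2: "a^2 \<le> (s+\<epsilon>)^2" "b^2 \<le> (s+\<epsilon>)^2" using assms by (auto intro: power_mono)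
  show ?thesis
  proof (cases "\<epsilon> \<le> s")
    case True
    have "(2 * (s - \<epsilon>))^2 \<le> M^2" using assms True by (intro power_mono) auto
    moreover have "(2 * (s - \<epsilon>))^2 = 4 * s^2 - 8 * (s * \<epsilon>) + 4 * \<epsilon>^2" "(s + \<epsilon>)^2 = s^2 + 2 * (s * \<epsilon>) + \<epsilon>^2"
      "16 * \<epsilon> * (s + \<epsilon>) = 16 * (s * \<epsilon>) + 16 * \<epsilon>^2"
      by (simp_all add: power2_eq_square algebra_simps)
    moreover have "0 \<le> \<epsilon>^2" by simp
    ultimately show ?thesis using a2 by linarith
  next
    case False
    have "0 \<le> M^2" by simp
    moreover have "4 * (s+\<epsilon>)^2 \<le> 16 * \<epsilon> * (s + \<epsilon>)"
    proof -
      have "4 * (s+\<epsilon>)^2 = 4 * (s+\<epsilon>) * (s+\<epsilon>)" by (simp add: power2_eq_square)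
      also have "\<dots> \<le> 4 * (s+\<epsilon>) * (4*\<epsilon>)" using False assms by (intro mult_left_mono) auto
      finally show ?thesis by (simp add: algebra_simps)
    qed
    ultimately show ?thesis using a2 by linarith
  qed
qed

lemma fip_balls:
  fixes y :: "'i \<Rightarrow> 'a::{real_inner,complete_space}" and r :: "'i \<Rightarrow> real"
  assumes fin: "\<And>F. finite F \<Longrightarrow> F \<subseteq> D \<Longrightarrow> \<exists>z. \<forall>d\<in>F. norm (z - y d) \<le> r d"
  shows "\<exists>z. \<forall>d\<in>D. norm (z - y d) \<le> r d"
proof (cases "D = {}")
  case True thus ?thesis by simp
next
  case False
  then obtain d0 where d0: "d0 \<in> D" by auto
  define C where "C F = {z. \<forall>d\<in>F. norm (z - y d) \<le> r d}" for F
  define m where "m F = Inf (norm ` C F)" for F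
  define FS where "FS = {F. finite F \<and> F \<subseteq> D}"
  have Cne: "C F \<noteq> {}" if "F \<in> FS" for F using fin that unfolding C_def FS_def by auto
  have bdd: "bdd_below (norm ` C F)" for F by (rule bdd_belowI[of _ 0]) auto
  have mle: "m F \<le> norm z" if "z \<in> C F" for F z unfolding m_def using bdd that by (intro cInf_lower) auto
  have mnn: "0 \<le> m F" if "F \<in> FS" for F unfolding m_def using Cne[OF that] by (intro cInf_greatest) auto
  have mapprox: "\<exists>z\<in>C F. norm z < m F + e" if hF: "F \<in> FS" "e > 0" for F e
  proof -
    have "Inf (norm ` C F) < m F + e" using hF unfolding m_def by simp
    then obtain w where "w \<in> norm ` C F" "w < m F + e" using cInf_lessD[of "norm ` C F"] Cne[OF hF(1)] by blast
    thus ?thesis by auto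
  qed
  have Canti: "C G \<subseteq> C F" if "F \<subseteq> G" for F G unfolding C_def using that by auto
  have mmono: "m F \<le> m G" if "F \<subseteq> G" "G \<in> FS" for F G
    unfolding m_def using Cne[OF that(2)] bdd Canti[OF that(1)] by (intro cInf_superset_mono) auto
  define B where "B = norm (y d0) + r d0"
  have mB: "m F \<le> B" if "F \<in> FS" for F
  proof -
    have iF: "insert d0 F \<in> FS" using that d0 unfolding FS_def by auto
    obtain z where z: "z \<in> C (insert d0 F)" using Cne[OF iF] by auto
    have "norm z \<le> norm (z - y d0) + norm (y d0)" using norm_triangle_ineq[of "z - y d0" "y d0"] by simp
    also have "\<dots> \<le> B" using z unfolding C_def B_def by auto
    finally have "norm z \<le> B" .
    moreover have "m F \<le> m (insert d0 F)" using iF by (intro mmono) auto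
    moreover have "m (insert d0 F) \<le> norm z" using z by (rule mle)
    ultimately show ?thesis by linarith
  qed
  define s where "s = Sup (m ` FS)"
  have FSne: "{} \<in> FS" unfolding FS_def by simp
  have bddA: "bdd_above (m ` FS)" using mB by (intro bdd_aboveI[of _ B]) auto
  have ms: "m F \<le> s" if "F \<in> FS" for F unfolding s_def using bddA that by (intro cSup_upper) auto
  have s0: "0 \<le> s" using ms[OF FSne] mnn[OF FSne] by simp
  have sapprox: "\<exists>F. F \<in> FS \<and> s - e < m F" if "e > 0" for e
  proof -
    have "s - e < Sup (m ` FS)" using that unfolding s_def by simp
    from less_cSupD[OF _ this] FSne show ?thesis by blast
  qed
  define e where "e n = inverse (real (Suc n))" for n
  have epos: "e n > 0" for n unfolding e_def by simp
  have ele1: "e n \<le> 1" for n unfolding e_def by (simp add: inverse_le_1_iff)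
  have "\<forall>n. \<exists>F. F \<in> FS \<and> s - e n < m F" using sapprox epos by blast
  hence "\<exists>Fr. \<forall>n. Fr n \<in> FS \<and> s - e n < m (Fr n)" by (rule choice)
  then obtain Fr where Fr: "\<And>n. Fr n \<in> FS \<and> s - e n < m (Fr n)" by blast
  define F where "F n = (\<Union>k\<le>n. Fr k)" for n
  have FFS: "F n \<in> FS" for n using Fr unfolding F_def FS_def by auto
  have Fmono: "F n \<subseteq> F k" if "n \<le> k" for n k unfolding F_def using that by (auto intro: le_trans)
  have mF: "s - e n < m (F n)" for n
  proof -
    have "m (Fr n) \<le> m (F n)" using FFS[of n] unfolding F_def by (intro mmono) auto
    thus ?thesis using Fr[of n] by simp
  qed
  have close: "norm (u - v)^2 \<le> 16 * \<epsilon> * (s + \<epsilon>)"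
    if G: "G \<in> FS" "u \<in> C G" "v \<in> C G" "\<epsilon> > 0" "norm u \<le> s + \<epsilon>" "norm v \<le> s + \<epsilon>" "s - \<epsilon> \<le> m G"
    for G u v \<epsilon>
  proof -
    have mid: "(1/2) *\<^sub>R (u + v) \<in> C G" unfolding C_def
    proof (intro CollectI ballI)
      fix d assume "d \<in> G"
      hence "norm (u - y d) \<le> r d" "norm (v - y d) \<le> r d" using G unfolding C_def by auto
      moreover have "(1/2) *\<^sub>R (u + v) - y d = (1/2) *\<^sub>R ((u - y d) + (v - y d))" by (simp add: algebra_simps half_half)
      moreover have "norm ((u - y d) + (v - y d)) \<le> norm (u - y d) + norm (v - y d)" by (rule norm_triangle_ineq)
      ultimately show "norm ((1/2) *\<^sub>R (u + v) - y d) \<le> r d" by simp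
    qed
    have "m G \<le> norm ((1/2) *\<^sub>R (u + v))" using mid by (rule mle)
    hence M: "2 * m G \<le> norm (u + v)" by simp
    show ?thesis unfolding parallelogram
      by (rule close_aux) (use s0 G M mnn[OF G(1)] in auto)
  qed
  obtain zs where zs: "\<And>n. zs n \<in> C (F n) \<and> norm (zs n) < m (F n) + e n"
  proof -
    have "\<forall>n. \<exists>z. z \<in> C (F n) \<and> norm z < m (F n) + e n" using mapprox FFS epos by blast
    hence "\<exists>zs. \<forall>n. zs n \<in> C (F n) \<and> norm (zs n) < m (F n) + e n" by (rule choice)
    thus ?thesis using that by blast
  qed
  have zsb: "norm (zs n) \<le> s + e n" for n using zs[of n] ms[OF FFS[of n]] by simp
  have zsC: "zs k \<in> C (F n)" if "n \<le> k" for n k using zs[of k] Canti[OF Fmono[OF that]] by auto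
  have emono: "e k \<le> e n" if "n \<le> k" for n k unfolding e_def using that
    by (simp add: le_imp_inverse_le)
  have "Cauchy zs"
  proof (rule CauchyI)
    fix \<epsilon> :: real assume ep: "\<epsilon> > 0"
    have pos: "0 < \<epsilon>^2 / (16 * (s + 1))" using ep s0 by simp
    obtain N where N0: "inverse (real (Suc N)) < \<epsilon>^2 / (16 * (s + 1))"
      using reals_Archimedean[OF pos] by blast
    have N: "e N * (16 * (s + 1)) < \<epsilon>^2"
      using N0 s0 unfolding e_def by (simp add: pos_less_divide_eq)
    have "norm (zs a - zs b) < \<epsilon>" if ab: "a \<ge> N" "b \<ge> N" for a b
    proof -
      have ua: "norm (zs a) \<le> s + e N" using zsb[of a] emono[OF ab(1)] by linarith
      have ub: "norm (zs b) \<le> s + e N" using zsb[of b] emono[OF ab(2)] by linarith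
      have mN: "s - e N \<le> m (F N)" using mF[of N] by linarith
      have "norm (zs a - zs b)^2 \<le> 16 * e N * (s + e N)"
        by (rule close[OF FFS[of N] zsC[OF ab(1)] zsC[OF ab(2)] epos ua ub mN])
      also have "\<dots> \<le> 16 * e N * (s + 1)" using ele1[of N] epos[of N] by (intro mult_left_mono) auto
      also have "\<dots> = e N * (16 * (s + 1))" by simp
      also have "\<dots> < \<epsilon>^2" by (rule N)
      finally have "norm (zs a - zs b)^2 < \<epsilon>^2" .
      thus ?thesis using ep by (rule power2_less_imp_less[OF _ less_imp_le])
    qed
    thus "\<exists>M. \<forall>m\<ge>M. \<forall>n\<ge>M. norm (zs m - zs n) < \<epsilon>" by blast
  qed
  then obtain p where p: "zs \<longlonglongrightarrow> p" using Cauchy_convergent_iff convergent_def by blast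
  show ?thesis
  proof (intro exI ballI)
    fix d assume dD: "d \<in> D"
    have GFS: "insert d (F n) \<in> FS" for n using FFS[of n] dD unfolding FS_def by auto
    obtain w where w: "\<And>n. w n \<in> C (insert d (F n)) \<and> norm (w n) < m (insert d (F n)) + e n"
    proof -
      have "\<forall>n. \<exists>z. z \<in> C (insert d (F n)) \<and> norm z < m (insert d (F n)) + e n"
        using mapprox GFS epos by blast
      hence "\<exists>w. \<forall>n. w n \<in> C (insert d (F n)) \<and> norm (w n) < m (insert d (F n)) + e n" by (rule choice)
      thus ?thesis using that by blast
    qed
    have bnd: "norm (zs n - y d) \<le> r d + sqrt (16 * e n * (s + 1))" for n
    proof -
      have wF: "w n \<in> C (F n)" using w[of n] Canti[of "F n" "insert d (F n)"] by auto
      have wb: "norm (w n) \<le> s + e n" using w[of n] ms[OF GFS[of n]] by simp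
      have "norm (zs n - w n)^2 \<le> 16 * e n * (s + e n)"
        by (rule close[OF FFS[of n] _ wF epos]) (use zs[of n] zsb[of n] wb mF[of n] in auto)
      also have "\<dots> \<le> 16 * e n * (s + 1)" using ele1[of n] epos[of n] by (intro mult_left_mono) auto
      finally have "norm (zs n - w n) \<le> sqrt (16 * e n * (s + 1))" by (rule real_le_rsqrt)
      moreover have "norm (w n - y d) \<le> r d" using w[of n] unfolding C_def by auto
      moreover have "norm (zs n - y d) \<le> norm (zs n - w n) + norm (w n - y d)"
        using norm_triangle_ineq[of "zs n - w n" "w n - y d"] by simp
      ultimately show ?thesis by linarith
    qed
    have l1: "(\<lambda>n. norm (zs n - y d)) \<longlonglongrightarrow> norm (p - y d)" using p by (intro tendsto_intros)
    have "(\<lambda>n. r d + sqrt (16 * e n * (s + 1))) \<longlonglongrightarrow> r d + sqrt (16 * 0 * (s + 1))"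
      unfolding e_def by (intro tendsto_intros LIMSEQ_inverse_real_of_nat)
    hence l2: "(\<lambda>n. r d + sqrt (16 * e n * (s + 1))) \<longlonglongrightarrow> r d" by simp
    show "norm (p - y d) \<le> r d" using LIMSEQ_le[OF l1 l2] bnd by blast
  qed
qed



lemma key_id:
  fixes a b :: "'a::real_inner" and \<rho> :: real
  shows "norm (a + b)^2 - norm (a - (2*\<rho>+1) *\<^sub>R b)^2 = 4*(\<rho>+1)*(inner a b - \<rho> * norm b ^2)"
  by (simp add: power2_norm_eq_inner inner_add_left inner_add_right inner_diff_left inner_diff_right inner_commute algebra_simps)

lemma Nop_iff:
  "(x, w) \<in> Nop \<rho> A \<longleftrightarrow> (\<exists>t u. (t,u) \<in> A \<and> x = t + u \<and> w = t - (2*\<rho>+1) *\<^sub>R u)"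
proof -
  have e: "(2 * (\<rho> + 1)) *\<^sub>R t - (2 * \<rho> + 1) *\<^sub>R (t + u) = t - (2*\<rho>+1) *\<^sub>R u" for t u :: 'a
  proof -
    have "(2 * (\<rho> + 1)) *\<^sub>R t = (1 + (2*\<rho>+1)) *\<^sub>R t"
      by (rule arg_cong[where f="\<lambda>c. c *\<^sub>R t"]) simp
    also have "\<dots> = t + (2*\<rho>+1) *\<^sub>R t" by (simp only: scaleR_add_left scaleR_one)
    finally show ?thesis by (simp add: algebra_simps)
  qed
  show ?thesis unfolding Nop_def resolvent_def id_plus_def
    using e by (auto simp: e) (metis e)
qed

lemma part1:
  fixes A :: "('a::real_inner \<times> 'a) set"
  assumes r: "\<rho> > -1"
  shows "comonotone \<rho> A \<longleftrightarrow> nonexpansive_rel (Nop \<rho> A)"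
proof
  assume c: "comonotone \<rho> A"
  have ne: "norm (w - w') \<le> norm (x - x')" if h: "(x,w) \<in> Nop \<rho> A" "(x',w') \<in> Nop \<rho> A" for x w x' w'
  proof -
    obtain t u where tu: "(t,u) \<in> A" "x = t + u" "w = t - (2*\<rho>+1) *\<^sub>R u"
      using h(1) unfolding Nop_iff by blast
    obtain s v where sv: "(s,v) \<in> A" "x' = s + v" "w' = s - (2*\<rho>+1) *\<^sub>R v"
      using h(2) unfolding Nop_iff by blast
    have "inner (t - s) (u - v) \<ge> \<rho> * (norm (u - v))\<^sup>2" using c tu sv unfolding comonotone_def by blast
    hence "norm ((t-s) + (u-v))^2 - norm ((t-s) - (2*\<rho>+1) *\<^sub>R (u-v))^2 \<ge> 0"
      unfolding key_id using r by simp
    moreover have "x - x' = (t-s) + (u-v)" "w - w' = (t-s) - (2*\<rho>+1) *\<^sub>R (u-v)"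
      using tu sv by (auto simp: algebra_simps)
    ultimately show ?thesis by (metis diff_ge_0_iff_ge norm_ge_zero power2_le_imp_le)
  qed
  show "nonexpansive_rel (Nop \<rho> A)" unfolding nonexpansive_rel_def
  proof (intro conjI allI impI)
    fix x y z assume "(x,y) \<in> Nop \<rho> A" "(x,z) \<in> Nop \<rho> A"
    from ne[OF this] show "y = z" by simp
  qed (use ne in blast)
next
  assume n: "nonexpansive_rel (Nop \<rho> A)"
  show "comonotone \<rho> A" unfolding comonotone_def
  proof (intro allI impI)
    fix t u s v assume tu: "(t,u) \<in> A" and sv: "(s,v) \<in> A"
    have "(t + u, t - (2*\<rho>+1) *\<^sub>R u) \<in> Nop \<rho> A" "(s + v, s - (2*\<rho>+1) *\<^sub>R v) \<in> Nop \<rho> A"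
      using tu sv by (auto simp: Nop_iff)
    hence "norm ((t - (2*\<rho>+1) *\<^sub>R u) - (s - (2*\<rho>+1) *\<^sub>R v)) \<le> norm ((t+u) - (s+v))"
      using n unfolding nonexpansive_rel_def by blast
    moreover have "(t+u) - (s+v) = (t-s) + (u-v)" "(t - (2*\<rho>+1) *\<^sub>R u) - (s - (2*\<rho>+1) *\<^sub>R v) = (t-s) - (2*\<rho>+1) *\<^sub>R (u-v)"
      by (auto simp: algebra_simps)
    ultimately have "norm ((t-s) - (2*\<rho>+1) *\<^sub>R (u-v))^2 \<le> norm ((t-s) + (u-v))^2"
      by (simp add: power_mono)
    hence "4*(\<rho>+1)*(inner (t-s) (u-v) - \<rho> * norm (u-v) ^2) \<ge> 0"
      using key_id[of "t-s" "u-v" \<rho>] by linarith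
    thus "\<rho> * (norm (u - v))\<^sup>2 \<le> inner (t - s) (u - v)" using r
      by (simp add: zero_le_mult_iff)
  qed
qed

lemma one_point_ext:
  fixes S :: "('a::{real_inner,complete_space} \<times> 'a) set"
  assumes "\<And>c y c' y'. (c,y) \<in> S \<Longrightarrow> (c',y') \<in> S \<Longrightarrow> norm (y - y') \<le> norm (c - c')"
    and "\<And>c y. (c,y) \<in> S \<Longrightarrow> c \<noteq> x"
  shows "\<exists>w. \<forall>(c,y)\<in>S. norm (w - y) \<le> norm (x - c)"
proof -
  have "\<exists>z. \<forall>d\<in>S. norm (z - snd d) \<le> norm (x - fst d)"
  proof (rule fip_balls)
    fix F assume F: "finite F" "F \<subseteq> S"
    show "\<exists>z. \<forall>d\<in>F. norm (z - snd d) \<le> norm (x - fst d)"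
    proof (rule kirsz_fin[OF F(1)])
      fix i j assume "i \<in> F" "j \<in> F"
      thus "norm (snd i - snd j) \<le> norm (fst i - fst j)" using F(2) assms(1)[of "fst i" "snd i" "fst j" "snd j"] by auto
    next
      fix i assume "i \<in> F"
      thus "fst i \<noteq> x" using F(2) assms(2)[of "fst i" "snd i"] by auto
    qed
  qed
  thus ?thesis by (auto simp: case_prod_beta)
qed

lemma scale_split: "(2*\<rho>+2) *\<^sub>R w = w + (2*\<rho>+1) *\<^sub>R (w::'a::real_vector)"
proof -
  have "(2*\<rho>+2) *\<^sub>R w = (1 + (2*\<rho>+1)) *\<^sub>R w"
    by (rule arg_cong[where f="\<lambda>c. c *\<^sub>R w"]) simp
  also have "\<dots> = w + (2*\<rho>+1) *\<^sub>R w" by (simp only: scaleR_add_left scaleR_one)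
  finally show ?thesis .
qed

lemma Range_id_plus: "x \<in> Range (id_plus A) \<longleftrightarrow> (\<exists>t u. (t,u) \<in> A \<and> x = t + u)"
  unfolding id_plus_def by auto

theorem proposition3p12:
  fixes A :: "('a::{real_inner, complete_space} \<times> 'a) set" and \<rho> :: real
  assumes "Domain A \<noteq> {}" and "\<rho> > -1"
  shows "(comonotone \<rho> A \<longleftrightarrow> nonexpansive_rel (Nop \<rho> A)) \<and>
         (max_comonotone \<rho> A \<longleftrightarrow>
            nonexpansive_rel (Nop \<rho> A) \<and> Range (id_plus A) = UNIV)"
proof
  note r = assms(2)
  show P1: "comonotone \<rho> A \<longleftrightarrow> nonexpansive_rel (Nop \<rho> A)" using part1[OF r] .
  have r1: "2*\<rho>+2 \<noteq> 0" using r by simp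
  show "max_comonotone \<rho> A \<longleftrightarrow> nonexpansive_rel (Nop \<rho> A) \<and> Range (id_plus A) = UNIV"
  proof
    assume m: "max_comonotone \<rho> A"
    hence c: "comonotone \<rho> A" and mx: "\<And>B. comonotone \<rho> B \<Longrightarrow> A \<subseteq> B \<Longrightarrow> B = A"
      unfolding max_comonotone_def by auto
    have n: "nonexpansive_rel (Nop \<rho> A)" using c P1 by simp
    have "x \<in> Range (id_plus A)" for x
    proof (rule ccontr)
      assume nx: "x \<notin> Range (id_plus A)"
      have "\<exists>w. \<forall>(c,y)\<in>Nop \<rho> A. norm (w - y) \<le> norm (x - c)"
      proof (rule one_point_ext)
        show "norm (y - y') \<le> norm (c - c')" if "(c,y) \<in> Nop \<rho> A" "(c',y') \<in> Nop \<rho> A" for c y c' y'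
          using n that unfolding nonexpansive_rel_def by blast
        show "c \<noteq> x" if "(c,y) \<in> Nop \<rho> A" for c y
          using that nx unfolding Nop_iff Range_id_plus by blast
      qed
      then obtain w where w: "\<And>c y. (c,y) \<in> Nop \<rho> A \<Longrightarrow> norm (w - y) \<le> norm (x - c)" by auto
      define u where "u = inverse (2*\<rho>+2) *\<^sub>R (x - w)"
      define t where "t = x - u"
      have xt: "x = t + u" unfolding t_def by simp
      have wt: "w = t - (2*\<rho>+1) *\<^sub>R u"
      proof -
        have "(2*\<rho>+2) *\<^sub>R u = x - w" unfolding u_def using r1 by simp
        hence "x - w = u + (2*\<rho>+1) *\<^sub>R u"
          using scale_split[of \<rho> u] by simp
        thus ?thesis unfolding t_def by (simp add: algebra_simps)
      qed
      have "comonotone \<rho> (insert (t,u) A)"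
      proof -
        have cr: "inner (t - s) (u - v) \<ge> \<rho> * (norm (u - v))\<^sup>2" if sv: "(s,v) \<in> A" for s v
        proof -
          have "(s + v, s - (2*\<rho>+1) *\<^sub>R v) \<in> Nop \<rho> A" using sv by (auto simp: Nop_iff)
          from w[OF this] have "norm (w - (s - (2*\<rho>+1) *\<^sub>R v)) \<le> norm (x - (s+v))" .
          moreover have "x - (s+v) = (t-s) + (u-v)" "w - (s - (2*\<rho>+1) *\<^sub>R v) = (t-s) - (2*\<rho>+1) *\<^sub>R (u-v)"
            using xt wt by (auto simp: algebra_simps)
          ultimately have "norm ((t-s) - (2*\<rho>+1) *\<^sub>R (u-v))^2 \<le> norm ((t-s) + (u-v))^2"
            by (simp add: power_mono)
          hence "4*(\<rho>+1)*(inner (t-s) (u-v) - \<rho> * norm (u-v) ^2) \<ge> 0"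
            using key_id[of "t-s" "u-v" \<rho>] by linarith
          thus ?thesis using r by (simp add: zero_le_mult_iff)
        qed
        show ?thesis unfolding comonotone_def
        proof (intro allI impI)
          fix x1 u1 y1 v1 assume h1: "(x1, u1) \<in> insert (t, u) A" and h2: "(y1, v1) \<in> insert (t, u) A"
          show "\<rho> * (norm (u1 - v1))\<^sup>2 \<le> inner (x1 - y1) (u1 - v1)"
          proof (cases "(x1,u1) = (t,u)")
            case True
            show ?thesis
            proof (cases "(y1,v1) = (t,u)")
              case True
              with \<open>(x1,u1) = (t,u)\<close> show ?thesis by simp
            next
              case False
              with h2 have "(y1,v1) \<in> A" by auto
              from cr[OF this] True show ?thesis by simp
            qed
          next
            case False
            with h1 have a1: "(x1,u1) \<in> A" by auto
            show ?thesis
            proof (cases "(y1,v1) = (t,u)")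
              case True
              from cr[OF a1] True have "\<rho> * (norm (u - u1))\<^sup>2 \<le> inner (t - x1) (u - u1)" by simp
              moreover have "norm (u1 - u) = norm (u - u1)" by (rule norm_minus_commute)
              moreover have "inner (x1 - t) (u1 - u) = inner (t - x1) (u - u1)"
                by (simp add: inner_diff_left inner_diff_right inner_commute)
              ultimately show ?thesis using True by simp
            next
              case False
              with h2 have "(y1,v1) \<in> A" by auto
              with a1 c show ?thesis unfolding comonotone_def by blast
            qed
          qed
        qed
      qed
      from mx[OF this] have "(t,u) \<in> A" by auto
      with xt nx show False unfolding Range_id_plus by blast
    qed
    thus "nonexpansive_rel (Nop \<rho> A) \<and> Range (id_plus A) = UNIV" using n by auto
  next
    assume h: "nonexpansive_rel (Nop \<rho> A) \<and> Range (id_plus A) = UNIV"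
    have c: "comonotone \<rho> A" using h P1 by simp
    have "B = A" if cB: "comonotone \<rho> B" and AB: "A \<subseteq> B" for B
    proof
      show "B \<subseteq> A"
      proof
        fix p assume pB: "p \<in> B"
        obtain t u where p: "p = (t,u)" by (cases p)
        have "t + u \<in> Range (id_plus A)" using h by simp
        then obtain t' u' where a: "(t',u') \<in> A" "t + u = t' + u'" unfolding Range_id_plus by blast
        have nB: "nonexpansive_rel (Nop \<rho> B)" using part1[OF r, of B] cB by simp
        have "(t + u, t - (2*\<rho>+1) *\<^sub>R u) \<in> Nop \<rho> B" "(t + u, t' - (2*\<rho>+1) *\<^sub>R u') \<in> Nop \<rho> B"
          using pB p a AB unfolding Nop_iff by (metis subsetD)+
        hence e: "t - (2*\<rho>+1) *\<^sub>R u = t' - (2*\<rho>+1) *\<^sub>R u'"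
          using nB unfolding nonexpansive_rel_def by blast
        have "(2*\<rho>+2) *\<^sub>R (u - u') = 0"
        proof -
          have "(2*\<rho>+2) *\<^sub>R (u - u') = (u - u') + (2*\<rho>+1) *\<^sub>R (u - u')"
            by (rule scale_split)
          also have "\<dots> = 0"
          proof -
            have e1: "(2*\<rho>+1) *\<^sub>R (u - u') = t - t'" using e
              by (simp add: scaleR_diff_right algebra_simps)
            have e2: "u - u' = t' - t" using a(2) by (simp add: algebra_simps)
            show ?thesis by (subst e1) (simp add: e2)
          qed
          finally show ?thesis .
        qed
        hence "u = u'" using r1 by simp
        with a have "t = t'" by simp
        with \<open>u = u'\<close> a p show "p \<in> A" by simp
      qed
    qed (rule AB)
    thus "max_comonotone \<rho> A" using c unfolding max_comonotone_def by blast
  qed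
qed

end
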